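(* In the setting below, for any $\vec w=(w_1,\ldots,w_n)$ with each $w_i\in W_M^Q$, \[ \theta^M(\vec w)-\theta^H(\vec w)=\frac{1}{2(r-s)}\big(\mathrm{expdim}_G(\vec w)-\mathrm{expdim}_M(\vec w)\big). \]
   Context: Weight space with orthonormal basis $\epsilon_1,\ldots,\epsilon_r$, dual basis $\epsilon_i^*$. $G=\mathrm{Sp}(2r)$ with positive roots $\epsilon_i-\epsilon_j$ ($i<j$), $\epsilon_i+\epsilon_j$ ($i\le j$), simple roots $\alpha_i=\epsilon_i-\epsilon_{i+1}$, $\alpha_r=2\epsilon_r$. Fix $1\le k\le s<r$. $M\cong\mathrm{Sp}(2s)\times\mathrm{Sp}(2(r-s))$ is the centralizer of $\tau=\mathrm{diag}(-1,\ldots,-1,1,\ldots,1,-1,\ldots,-1)$ ($2(r-s)$ ones) with positive roots $R^+_M$ the positive roots of $G$ trivial on $\tau$. $H=\mathrm{SO}(2s+1)\times\mathrm{Sp}(2(r-s))$ with positive roots $\epsilon_i\pm\epsilon_j$ ($1\le i<j\le s$), $\epsilon_i$ ($1\le i\le s$) together with the second-factor roots of $M$. $P$ is the maximal parabolic of $G$ omitting $\alpha_k$ ($G/P\cong\mathrm{IG}(k,2r)$), $Q=M\cap P$ ($M/Q\cong\mathrm{IG}(k,2s)$), $Q^H$ the corresponding parabolic of $H$; $x_Q=\sum_{i\le k}\epsilon_i^*$; $W_M^Q$ minimal coset representatives (same for $M$ and $H$, contained in $W^P$). $\chi^M_w=\sum_{\beta\in(R^+_M\setminus R^+_L)\cap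 w^{-1}R^+_M}\beta$ and $\chi^H_w$ likewise with $R^+_H$ and the Levi of $Q^H$. $\theta^M(\vec w)=(\chi^M_1-\sum_i\chi^M_{w_i})(x_Q)$, $\theta^H(\vec w)=(\chi^H_1-\sum_i\chi^H_{w_i})(x_Q)$ ($1$ the identity element). $\mathrm{expdim}_G(\vec w)=\dim(G/P)-\sum_i\mathrm{codim}(C_{w_i})$ and $\mathrm{expdim}_M(\vec w)=\dim(M/Q)-\sum_i\mathrm{codim}(C^M_{w_i})$, where $C_w\subseteq G/P$ and $C^M_w\subseteq M/Q$ are the Schubert cells indexed by $w$. *)

theory Defs
  imports Complex_Main "HOL-Library.Function_Algebras"
begin

text \<open>Weights of Sp(2r): integer vectors indexed by 1..r, as functions nat => int
  (coordinates w.r.t. the orthonormal basis eps_1,...,eps_r).\<close>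

type_synonym weight = "nat \<Rightarrow> int"

definition eps :: "nat \<Rightarrow> weight" where
  "eps i = (\<lambda>j. if j = i then 1 else 0)"

definition xQ :: "nat \<Rightarrow> weight \<Rightarrow> int" where
  "xQ k \<beta> = (\<Sum>i\<in>{1..k}. \<beta> i)"

definition posroots_G :: "nat \<Rightarrow> weight set" where
  "posroots_G r =
     {eps i - eps j | i j. 1 \<le> i \<and> i < j \<and> j \<le> r} \<union>
     {eps i + eps j | i j. 1 \<le> i \<and> i \<le> j \<and> j \<le> r}"

text \<open>Value of the character e^beta at tau = diag(-1,..,-1,1,..,1,-1,..,-1):
  tau acts on eps_i by -1 for i <= s and by 1 for s < i <= r.\<close>
definition char_at_tau :: "nat \<Rightarrow> weight \<Rightarrow> int" where
  "char_at_tau s \<beta> = (\<Prod>i\<in>{1..s}. (-1::int) ^ nat \<bar>\<beta> i\<bar>)"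

definition posroots_M :: "nat \<Rightarrow> nat \<Rightarrow> weight set" where
  "posroots_M r s = {\<beta> \<in> posroots_G r. char_at_tau s \<beta> = 1}"

text \<open>Positive roots of H = SO(2s+1) x Sp(2(r-s)).\<close>
definition posroots_H :: "nat \<Rightarrow> nat \<Rightarrow> weight set" where
  "posroots_H r s =
     {eps i - eps j | i j. 1 \<le> i \<and> i < j \<and> j \<le> s} \<union>
     {eps i + eps j | i j. 1 \<le> i \<and> i < j \<and> j \<le> s} \<union>
     {eps i | i. 1 \<le> i \<and> i \<le> s} \<union>
     {\<beta> \<in> posroots_M r s. \<forall>i\<in>{1..s}. \<beta> i = 0}"

text \<open>Positive roots of the Levi of the parabolic determined by x_Q
  (the maximal parabolic omitting alpha_k, resp. its intersection with M, resp. Q^H).\<close>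
definition levi :: "weight set \<Rightarrow> nat \<Rightarrow> weight set" where
  "levi R k = {\<beta> \<in> R. xQ k \<beta> = 0}"

text \<open>Weyl group of Sp(2r): signed permutations w of {1..r}, encoded as
  w i = +-sigma(i) meaning w(eps_i) = sgn(w i) eps_{|w i|}; identity outside {1..r}.\<close>
definition weyl :: "nat \<Rightarrow> (nat \<Rightarrow> int) set" where
  "weyl r = {w. bij_betw (\<lambda>i. nat \<bar>w i\<bar>) {1..r} {1..r} \<and>
                (\<forall>i. i \<notin> {1..r} \<longrightarrow> w i = int i)}"

definition weyl_id :: "nat \<Rightarrow> int" where
  "weyl_id = (\<lambda>i. int i)"

definition act :: "nat \<Rightarrow> (nat \<Rightarrow> int) \<Rightarrow> weight \<Rightarrow> weight" where
  "act r w v = (\<lambda>j. \<Sum>i\<in>{1..r}. if nat \<bar>w i\<bar> = j then sgn (w i) * v i else 0)"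

text \<open>Weyl group of M = Sp(2s) x Sp(2(r-s)) (= Weyl group of H).\<close>
definition weyl_M :: "nat \<Rightarrow> nat \<Rightarrow> (nat \<Rightarrow> int) set" where
  "weyl_M r s = {w \<in> weyl r. \<forall>i\<in>{1..r}. (nat \<bar>w i\<bar> \<le> s \<longleftrightarrow> i \<le> s)}"

definition WMQ :: "nat \<Rightarrow> nat \<Rightarrow> nat \<Rightarrow> (nat \<Rightarrow> int) set" where
  "WMQ r s k = {w \<in> weyl_M r s.
      \<forall>\<beta> \<in> levi (posroots_M r s) k. act r w \<beta> \<in> posroots_M r s}"

definition chi :: "weight set \<Rightarrow> nat \<Rightarrow> nat \<Rightarrow> (nat \<Rightarrow> int) \<Rightarrow> weight" where
  "chi R r k w = (\<Sum>\<beta> \<in> (R - levi R k) \<inter> {\<beta>. act r w \<beta> \<in> R}. \<beta>)"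

definition theta :: "weight set \<Rightarrow> nat \<Rightarrow> nat \<Rightarrow> (nat \<Rightarrow> int) list \<Rightarrow> int" where
  "theta R r k ws = xQ k (chi R r k weyl_id - sum_list (map (chi R r k) ws))"

definition wlength :: "weight set \<Rightarrow> nat \<Rightarrow> (nat \<Rightarrow> int) \<Rightarrow> nat" where
  "wlength R r w = card {\<beta> \<in> R. - act r w \<beta> \<in> R}"

definition flagdim :: "weight set \<Rightarrow> nat \<Rightarrow> nat" where
  "flagdim R k = card (R - levi R k)"

text \<open>Codimension of the Schubert cell C_w = B w P / P (dim C_w = l(w)).\<close>
definition schubert_codim :: "weight set \<Rightarrow> nat \<Rightarrow> nat \<Rightarrow> (nat \<Rightarrow> int) \<Rightarrow> int" where
  "schubert_codim R r k w = int (flagdim R k) - int (wlength R r w)"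

definition expdim :: "weight set \<Rightarrow> nat \<Rightarrow> nat \<Rightarrow> (nat \<Rightarrow> int) list \<Rightarrow> int" where
  "expdim R r k ws = int (flagdim R k) - sum_list (map (schubert_codim R r k) ws)"

end

theory Submission imports Defs begin

definition v2 :: "int \<Rightarrow> nat \<Rightarrow> int \<Rightarrow> nat \<Rightarrow> weight" where
  "v2 a p b q = (\<lambda>l. (if l = p then a else 0) + (if l = q then b else 0))"

lemma v2_apply: "v2 a p b q l = (if l = p then a else 0) + (if l = q then b else 0)"
  by (simp add: v2_def)

lemma eps_diff: "eps i - eps j = v2 1 i (-1) j"
  by (auto simp: v2_def eps_def fun_eq_iff)
lemma eps_add: "eps i + eps j = v2 1 i 1 j"
  by (auto simp: v2_def eps_def fun_eq_iff)
lemma eps_v2: "eps i = v2 1 i 0 i"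
  by (auto simp: v2_def eps_def fun_eq_iff)
lemma v2_uminus: "- v2 a p b q = v2 (-a) p (-b) q"
  by (auto simp: v2_def fun_eq_iff)

lemma G_alt: "posroots_G r = {v2 1 i c j | i j c. 1 \<le> i \<and> i \<le> j \<and> j \<le> r \<and> (c = 1 \<or> (c = -1 \<and> i < j))}"
proof (rule set_eqI, rule iffI)
  fix x assume "x \<in> posroots_G r"
  then show "x \<in> {v2 1 i c j | i j c. 1 \<le> i \<and> i \<le> j \<and> j \<le> r \<and> (c = 1 \<or> (c = -1 \<and> i < j))}"
    unfolding posroots_G_def eps_diff eps_add
  proof (elim UnE CollectE exE conjE)
    fix i j assume "x = v2 1 i (-1) j" "1 \<le> i" "i < j" "j \<le> r"
    then show ?thesis by (intro CollectI exI[of _ i] exI[of _ j] exI[of _ "-1"]) auto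
  next
    fix i j assume "x = v2 1 i 1 j" "1 \<le> i" "i \<le> j" "j \<le> r"
    then show ?thesis by (intro CollectI exI[of _ i] exI[of _ j] exI[of _ "1"]) auto
  qed
next
  fix x assume "x \<in> {v2 1 i c j | i j c. 1 \<le> i \<and> i \<le> j \<and> j \<le> r \<and> (c = 1 \<or> (c = -1 \<and> i < j))}"
  then show "x \<in> posroots_G r" unfolding posroots_G_def eps_diff eps_add by auto
qed

lemma xQ_v2: "xQ k (v2 a p b q) = (if p \<in> {1..k} then a else 0) + (if q \<in> {1..k} then b else 0)"
  unfolding xQ_def v2_apply by (simp add: sum.distrib)

lemma xQ_diff: "xQ k (f - g) = xQ k f - xQ k g"
  unfolding xQ_def by (simp add: sum_subtractf)
lemma xQ_add: "xQ k (f + g) = xQ k f + xQ k g"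
  unfolding xQ_def by (simp add: sum.distrib)
lemma xQ_zero: "xQ k 0 = 0"
  unfolding xQ_def by simp
lemma sum_fun_apply: "(sum F S) x = (\<Sum>y\<in>S. F y x)" for F :: "'b \<Rightarrow> 'c \<Rightarrow> int"
proof (cases "finite S")
  case True then show ?thesis
    by (induction S rule: finite_induct) auto
qed simp
lemma sum_list_fun_apply: "(sum_list (map F ws)) x = sum_list (map (\<lambda>y. F y x) ws)" for F :: "'b \<Rightarrow> 'c \<Rightarrow> int"
  by (induction ws) auto
lemma xQ_sum: "xQ k (sum F S) = (\<Sum>x\<in>S. xQ k (F x))"
  unfolding xQ_def sum_fun_apply by (rule sum.swap)
lemma xQ_sum_list: "xQ k (sum_list (map F ws)) = sum_list (map (\<lambda>w. xQ k (F w)) ws)"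
  unfolding xQ_def sum_list_fun_apply by (induction ws) (auto simp: sum.distrib)

lemma char_v2_neq:
  assumes "p \<noteq> q"
  shows "char_at_tau s (v2 a p b q) = (if p \<in> {1..s} then (-1)^nat\<bar>a\<bar> else 1) * (if q \<in> {1..s} then (-1)^nat\<bar>b\<bar> else 1)"
proof -
  have "\<And>l. (-1::int) ^ nat \<bar>v2 a p b q l\<bar> = (if l = p then (-1)^nat\<bar>a\<bar> else 1) * (if l = q then (-1)^nat\<bar>b\<bar> else 1)"
    using assms by (auto simp: v2_apply)
  then show ?thesis unfolding char_at_tau_def by (simp add: prod.distrib)
qed

lemma char_v2_eq:
  "char_at_tau s (v2 a p b p) = (if p \<in> {1..s} then (-1)^nat\<bar>a+b\<bar> else 1)"
proof -
  have "\<And>l. (-1::int) ^ nat \<bar>v2 a p b p l\<bar> = (if l = p then (-1)^nat\<bar>a+b\<bar> else 1)"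
    by (auto simp: v2_apply)
  then show ?thesis unfolding char_at_tau_def by simp
qed

lemma weyl_P_in: "w \<in> weyl r \<Longrightarrow> i \<in> {1..r} \<Longrightarrow> nat \<bar>w i\<bar> \<in> {1..r}"
  unfolding weyl_def bij_betw_def by auto
lemma weyl_nz: "w \<in> weyl r \<Longrightarrow> i \<in> {1..r} \<Longrightarrow> w i \<noteq> 0"
  using weyl_P_in[of w r i] by auto
lemma weyl_sgn: "w \<in> weyl r \<Longrightarrow> i \<in> {1..r} \<Longrightarrow> sgn (w i) = 1 \<or> sgn (w i) = -1"
  using weyl_nz[of w r i] by (auto simp: sgn_if)
lemma weyl_inj: "w \<in> weyl r \<Longrightarrow> inj_on (\<lambda>i. nat \<bar>w i\<bar>) {1..r}"
  unfolding weyl_def bij_betw_def by auto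

lemma act_v2:
  assumes "w \<in> weyl r" "p \<in> {1..r}" "q \<in> {1..r}"
  shows "act r w (v2 a p b q) = v2 (sgn (w p) * a) (nat \<bar>w p\<bar>) (sgn (w q) * b) (nat \<bar>w q\<bar>)"
proof (rule ext)
  fix j
  have "\<And>i. (if nat \<bar>w i\<bar> = j then sgn (w i) * v2 a p b q i else 0)
     = (if i = p then (if nat \<bar>w p\<bar> = j then sgn (w p) * a else 0) else 0)
     + (if i = q then (if nat \<bar>w q\<bar> = j then sgn (w q) * b else 0) else 0)"
    by (auto simp: v2_apply algebra_simps)
  then have "act r w (v2 a p b q) j = (\<Sum>i\<in>{1..r}. (if i = p then (if nat \<bar>w p\<bar> = j then sgn (w p) * a else 0) else 0))
     + (\<Sum>i\<in>{1..r}. (if i = q then (if nat \<bar>w q\<bar> = j then sgn (w q) * b else 0) else 0))"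
    unfolding act_def by (simp add: sum.distrib)
  also have "\<dots> = v2 (sgn (w p) * a) (nat \<bar>w p\<bar>) (sgn (w q) * b) (nat \<bar>w q\<bar>) j"
    using assms(2,3) by (auto simp: v2_apply)
  finally show "act r w (v2 a p b q) j = v2 (sgn (w p) * a) (nat \<bar>w p\<bar>) (sgn (w q) * b) (nat \<bar>w q\<bar>) j" .
qed

lemma act_uminus: "act r w (- v) = - act r w v"
  unfolding act_def by (auto simp: fun_eq_iff sum_negf[symmetric] intro!: sum.cong)

lemma act_at:
  assumes "w \<in> weyl r" "i \<in> {1..r}"
  shows "act r w v (nat \<bar>w i\<bar>) = sgn (w i) * v i"
proof -
  have "\<And>i'. i' \<in> {1..r} \<Longrightarrow> (if nat \<bar>w i'\<bar> = nat \<bar>w i\<bar> then sgn (w i') * v i' else 0)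
       = (if i' = i then sgn (w i) * v i else 0)"
    using weyl_inj[OF assms(1)] assms(2) by (auto dest: inj_onD)
  then have "act r w v (nat \<bar>w i\<bar>) = (\<Sum>i'\<in>{1..r}. if i' = i then sgn (w i) * v i else 0)"
    unfolding act_def by (intro sum.cong) auto
  then show ?thesis using assms(2) by simp
qed

lemma weylM_block: "w \<in> weyl_M r s \<Longrightarrow> i \<in> {1..r} \<Longrightarrow> (nat \<bar>w i\<bar> \<le> s \<longleftrightarrow> i \<le> s)"
  unfolding weyl_M_def by auto

lemma weylM_image:
  assumes "w \<in> weyl_M r s" "s \<le> r"
  shows "(\<lambda>i. nat \<bar>w i\<bar>) ` {1..s} = {1..s}"
proof -
  have w: "w \<in> weyl r" using assms(1) unfolding weyl_M_def by auto
  have sub: "(\<lambda>i. nat \<bar>w i\<bar>) ` {1..s} \<subseteq> {1..s}"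
    using weylM_block[OF assms(1)] weyl_P_in[OF w] assms(2) by fastforce
  have inj: "inj_on (\<lambda>i. nat \<bar>w i\<bar>) {1..s}"
    using weyl_inj[OF w] assms(2) by (auto intro: inj_on_subset)
  show ?thesis using endo_inj_surj[OF _ sub inj] by simp
qed

lemma weylM_inj_s:
  assumes "w \<in> weyl_M r s" "s \<le> r"
  shows "inj_on (\<lambda>i. nat \<bar>w i\<bar>) {1..s}"
proof -
  have w: "w \<in> weyl r" using assms(1) unfolding weyl_M_def by auto
  show ?thesis using weyl_inj[OF w] assms(2) by (auto intro: inj_on_subset)
qed

lemma weylM_prod_inv:
  assumes "w \<in> weyl_M r s" "s \<le> r" "\<And>x. g (- x) = g x"
  shows "(\<Prod>l\<in>{1..s}. g (act r w v l)) = (\<Prod>l\<in>{1..s}. (g (v l) :: 'a :: comm_monoid_mult))"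
proof -
  have w: "w \<in> weyl r" using assms(1) unfolding weyl_M_def by auto
  have "(\<Prod>l\<in>{1..s}. g (act r w v l)) = (\<Prod>l\<in>(\<lambda>i. nat \<bar>w i\<bar>) ` {1..s}. g (act r w v l))"
    using weylM_image[OF assms(1,2)] by simp
  also have "\<dots> = (\<Prod>i\<in>{1..s}. g (act r w v (nat \<bar>w i\<bar>)))"
    using prod.reindex[OF weylM_inj_s[OF assms(1,2)]] by simp
  also have "\<dots> = (\<Prod>i\<in>{1..s}. g (v i))"
  proof (rule prod.cong)
    fix i assume i: "i \<in> {1..s}"
    then have i': "i \<in> {1..r}" using assms(2) by auto
    show "g (act r w v (nat \<bar>w i\<bar>)) = g (v i)"
      using act_at[OF w i'] weyl_sgn[OF w i'] assms(3) by auto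
  qed simp
  finally show ?thesis .
qed

lemma weylM_sum_inv:
  assumes "w \<in> weyl_M r s" "s \<le> r" "\<And>x. g (- x) = g x"
  shows "(\<Sum>l\<in>{1..s}. g (act r w v l)) = (\<Sum>l\<in>{1..s}. (g (v l) :: 'a :: comm_monoid_add))"
proof -
  have w: "w \<in> weyl r" using assms(1) unfolding weyl_M_def by auto
  have "(\<Sum>l\<in>{1..s}. g (act r w v l)) = (\<Sum>l\<in>(\<lambda>i. nat \<bar>w i\<bar>) ` {1..s}. g (act r w v l))"
    using weylM_image[OF assms(1,2)] by simp
  also have "\<dots> = (\<Sum>i\<in>{1..s}. g (act r w v (nat \<bar>w i\<bar>)))"
    using sum.reindex[OF weylM_inj_s[OF assms(1,2)]] by simp
  also have "\<dots> = (\<Sum>i\<in>{1..s}. g (v i))"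
  proof (rule sum.cong)
    fix i assume i: "i \<in> {1..s}"
    then have i': "i \<in> {1..r}" using assms(2) by auto
    show "g (act r w v (nat \<bar>w i\<bar>)) = g (v i)"
      using act_at[OF w i'] weyl_sgn[OF w i'] assms(3) by auto
  qed simp
  finally show ?thesis .
qed

lemma char_act: "w \<in> weyl_M r s \<Longrightarrow> s \<le> r \<Longrightarrow> char_at_tau s (act r w v) = char_at_tau s v"
  unfolding char_at_tau_def by (rule weylM_prod_inv) auto
lemma char_uminus: "char_at_tau s (- v) = char_at_tau s v"
  unfolding char_at_tau_def by simp

definition N1 :: "nat \<Rightarrow> weight \<Rightarrow> int" where "N1 s v = (\<Sum>l\<in>{1..s}. (v l)^2)"
lemma N1_act: "w \<in> weyl_M r s \<Longrightarrow> s \<le> r \<Longrightarrow> N1 s (act r w v) = N1 s v"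
  unfolding N1_def by (rule weylM_sum_inv) auto

lemma N1_v2_neq: "p \<noteq> q \<Longrightarrow> N1 s (v2 a p b q) = (if p \<in> {1..s} then a^2 else 0) + (if q \<in> {1..s} then b^2 else 0)"
proof -
  assume pq: "p \<noteq> q"
  have "\<And>l. (v2 a p b q l)^2 = (if l = p then a^2 else 0) + (if l = q then b^2 else 0)"
    using pq by (auto simp: v2_apply)
  then show ?thesis unfolding N1_def by (simp add: sum.distrib)
qed
lemma N1_v2_eq: "N1 s (v2 a p b p) = (if p \<in> {1..s} then (a+b)^2 else 0)"
proof -
  have "\<And>l. (v2 a p b p l)^2 = (if l = p then (a+b)^2 else 0)"
    by (auto simp: v2_apply)
  then show ?thesis unfolding N1_def by simp
qed

lemma G_elem:
  assumes "\<beta> \<in> posroots_G r"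
  obtains i j c where "\<beta> = v2 1 i c j" "1 \<le> i" "i \<le> j" "j \<le> r" "c = 1 \<or> (c = -1 \<and> i < j)"
  using assms unfolding G_alt by blast

lemma G_ge: "\<beta> \<in> posroots_G r \<Longrightarrow> \<beta> l \<ge> -1"
  by (erule G_elem) (auto simp: v2_apply)
lemma G_pos: "\<beta> \<in> posroots_G r \<Longrightarrow> \<exists>l. \<beta> l > 0"
  by (erule G_elem) (auto simp: v2_apply intro!: exI[where x = "_"])

lemma G_mem: "1 \<le> i \<Longrightarrow> i \<le> j \<Longrightarrow> j \<le> r \<Longrightarrow> c = 1 \<or> (c = -1 \<and> i < j) \<Longrightarrow> v2 1 i c j \<in> posroots_G r"
  unfolding G_alt by blast

lemma G1:
  assumes "1 \<le> p" "p < q" "q \<le> r" "a = 1 \<or> a = -1" "b = 1 \<or> b = -1"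
  shows "v2 a p b q \<in> posroots_G r \<longleftrightarrow> a = 1"
proof
  assume "v2 a p b q \<in> posroots_G r"
  then obtain i j c where e: "v2 a p b q = v2 1 i c j" "1 \<le> i" "i \<le> j" "j \<le> r" "c = 1 \<or> (c = -1 \<and> i < j)"
    by (rule G_elem)
  have ep: "v2 a p b q p = v2 1 i c j p" and eq: "v2 a p b q q = v2 1 i c j q"
     and ei: "v2 a p b q i = v2 1 i c j i"
    using e(1) by auto
  show "a = 1" using ep eq ei assms e(3,5) by (auto simp: v2_apply split: if_splits)
next
  assume "a = 1" then show "v2 a p b q \<in> posroots_G r" using assms G_mem[of p q r b] by auto
qed

definition Aset :: "nat \<Rightarrow> nat \<Rightarrow> weight set" where
  "Aset r s = {eps i - eps j | i j. 1 \<le> i \<and> i < j \<and> j \<le> s} \<union>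
     {eps i + eps j | i j. 1 \<le> i \<and> i < j \<and> j \<le> s} \<union>
     {\<beta> \<in> posroots_M r s. \<forall>i\<in>{1..s}. \<beta> i = 0}"
definition DM :: "nat \<Rightarrow> weight set" where "DM s = {eps i + eps i | i. 1 \<le> i \<and> i \<le> s}"
definition DH :: "nat \<Rightarrow> weight set" where "DH s = {eps i | i. 1 \<le> i \<and> i \<le> s}"

lemma H_decomp: "posroots_H r s = Aset r s \<union> DH s"
  unfolding posroots_H_def Aset_def DH_def by blast

lemma M_sub_G: "posroots_M r s \<subseteq> posroots_G r"
  unfolding posroots_M_def by auto

lemma Aset_cases:
  assumes "\<beta> \<in> Aset r s"
  shows "(\<exists>i j c. \<beta> = v2 1 i c j \<and> 1 \<le> i \<and> i < j \<and> j \<le> s \<and> (c = 1 \<or> c = -1)) \<or>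
         (\<beta> \<in> posroots_M r s \<and> (\<forall>i\<in>{1..s}. \<beta> i = 0))"
  using assms unfolding Aset_def eps_diff eps_add by blast

lemma DM_v2: "DM s = {v2 1 i 1 i | i. 1 \<le> i \<and> i \<le> s}"
  unfolding DM_def eps_add by simp
lemma DH_v2: "DH s = {v2 1 i 0 i | i. 1 \<le> i \<and> i \<le> s}"
  unfolding DH_def eps_v2 by simp

lemma M_decomp:
  assumes "s < r"
  shows "posroots_M r s = Aset r s \<union> DM s"
proof (rule set_eqI, rule iffI)
  fix \<beta> assume b: "\<beta> \<in> posroots_M r s"
  then have bG: "\<beta> \<in> posroots_G r" and ch: "char_at_tau s \<beta> = 1" unfolding posroots_M_def by auto
  obtain i j c where e: "\<beta> = v2 1 i c j" "1 \<le> i" "i \<le> j" "j \<le> r" "c = 1 \<or> (c = -1 \<and> i < j)"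
    using bG by (rule G_elem)
  show "\<beta> \<in> Aset r s \<union> DM s"
  proof (cases "i \<le> s")
    case False
    then have "\<forall>l\<in>{1..s}. \<beta> l = 0" using e by (auto simp: v2_apply)
    then show ?thesis using b unfolding Aset_def by blast
  next
    case True
    show ?thesis
    proof (cases "i = j")
      case True
      then have "c = 1" using e by auto
      then show ?thesis using e \<open>i \<le> s\<close> True unfolding DM_v2 by blast
    next
      case False
      then have ij: "i < j" using e by auto
      have cabs: "nat \<bar>c\<bar> = 1" using e by auto
      have "j \<le> s"
      proof (rule ccontr)
        assume "\<not> j \<le> s"
        then have "char_at_tau s \<beta> = -1" using e(1,2) ij \<open>i \<le> s\<close> by (simp add: char_v2_neq)
        then show False using ch by simp
      qed
      then have "\<beta> \<in> Aset r s"
        unfolding Aset_def eps_diff eps_add using e ij by (cases "c = 1") auto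
      then show ?thesis by blast
    qed
  qed
next
  fix \<beta> assume "\<beta> \<in> Aset r s \<union> DM s"
  then consider (a) i j c where "\<beta> = v2 1 i c j" "1 \<le> i" "i < j" "j \<le> s" "c = 1 \<or> c = -1"
    | (m) "\<beta> \<in> posroots_M r s" | (d) i where "\<beta> = v2 1 i 1 i" "1 \<le> i" "i \<le> s"
    using Aset_cases[of \<beta> r s] unfolding DM_v2 by blast
  then show "\<beta> \<in> posroots_M r s"
  proof cases
    case a
    have "\<beta> \<in> posroots_G r" using a assms by (intro G_mem[of i j r c, folded a(1)]) auto
    moreover have "char_at_tau s \<beta> = 1" using a by (auto simp: char_v2_neq)
    ultimately show ?thesis unfolding posroots_M_def by auto
  next
    case d
    have "\<beta> \<in> posroots_G r" using d assms by (intro G_mem[of i i r 1, folded d(1)]) auto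
    moreover have "char_at_tau s \<beta> = 1" using d by (auto simp: char_v2_eq)
    ultimately show ?thesis unfolding posroots_M_def by auto
  qed
qed

lemma Aset_N1: "\<beta> \<in> Aset r s \<Longrightarrow> N1 s \<beta> = 0 \<or> N1 s \<beta> = 2"
proof -
  assume "\<beta> \<in> Aset r s"
  then consider (a) i j c where "\<beta> = v2 1 i c j" "1 \<le> i" "i < j" "j \<le> s" "c = 1 \<or> c = -1"
    | (m) "\<forall>i\<in>{1..s}. \<beta> i = 0"
    using Aset_cases[of \<beta> r s] by blast
  then show ?thesis
  proof cases
    case a then show ?thesis by (auto simp: N1_v2_neq)
  next
    case m then show ?thesis unfolding N1_def by simp
  qed
qed

lemma DM_N1: "\<beta> \<in> DM s \<Longrightarrow> N1 s \<beta> = 4"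
  unfolding DM_v2 by (auto simp: N1_v2_eq)
lemma DH_N1: "\<beta> \<in> DH s \<Longrightarrow> N1 s \<beta> = 1"
  unfolding DH_v2 by (auto simp: N1_v2_eq)

lemma Aset_DM: "Aset r s \<inter> DM s = {}"
  using Aset_N1 DM_N1 by fastforce
lemma Aset_DH: "Aset r s \<inter> DH s = {}"
  using Aset_N1 DH_N1 by fastforce

lemma finite_G: "finite (posroots_G r)"
proof -
  have "posroots_G r \<subseteq> (\<lambda>(i,j,c). v2 1 i c j) ` ({1..r} \<times> {1..r} \<times> {1,-1})"
    unfolding G_alt by force
  then show ?thesis by (rule finite_subset) auto
qed
lemma finite_M: "finite (posroots_M r s)"
  using finite_G M_sub_G by (rule finite_subset[rotated])
lemma finite_DH: "finite (DH s)"
  unfolding DH_def by simp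
lemma finite_DM: "finite (DM s)"
  unfolding DM_def by simp
lemma finite_Aset: "s < r \<Longrightarrow> finite (Aset r s)"
  using finite_M[of r s] M_decomp[of s r] by auto
lemma finite_H: "s < r \<Longrightarrow> finite (posroots_H r s)"
  using finite_Aset finite_DH H_decomp by auto

lemma xQ_chi:
  assumes "finite R"
  shows "xQ k (chi R r k w) = (\<Sum>\<beta>\<in>R \<inter> {\<beta>. act r w \<beta> \<in> R}. xQ k \<beta>)"
proof -
  have "xQ k (chi R r k w) = (\<Sum>\<beta>\<in>(R - levi R k) \<inter> {\<beta>. act r w \<beta> \<in> R}. xQ k \<beta>)"
    unfolding chi_def xQ_sum by simp
  also have "\<dots> = (\<Sum>\<beta>\<in>R \<inter> {\<beta>. act r w \<beta> \<in> R}. xQ k \<beta>)"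
    by (rule sum.mono_neutral_left) (use assms in \<open>auto simp: levi_def\<close>)
  finally show ?thesis .
qed

lemma weylM_weyl: "w \<in> weyl_M r s \<Longrightarrow> w \<in> weyl r"
  unfolding weyl_M_def by auto

lemma sgn_cases_w: "w \<in> weyl r \<Longrightarrow> i \<in> {1..r} \<Longrightarrow> (0 < w i \<and> sgn (w i) = 1) \<or> (w i < 0 \<and> sgn (w i) = -1)"
  using weyl_nz[of w r i] by (auto simp: sgn_if)

lemma DM_part:
  assumes "w \<in> weyl_M r s" "s < r"
  shows "DM s \<inter> {\<beta>. act r w \<beta> \<in> posroots_M r s} = (\<lambda>i. v2 1 i 1 i) ` {i\<in>{1..s}. 0 < w i}"
proof -
  have w: "w \<in> weyl r" using assms(1) by (rule weylM_weyl)
  have key: "act r w (v2 1 i 1 i) \<in> posroots_M r s \<longleftrightarrow> 0 < w i" if i: "i \<in> {1..s}" for i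
  proof -
    have ir: "i \<in> {1..r}" using i assms(2) by auto
    have P: "nat \<bar>w i\<bar> \<in> {1..s}" using weyl_P_in[OF w ir] weylM_block[OF assms(1) ir] i by auto
    have a: "act r w (v2 1 i 1 i) = v2 (sgn (w i)) (nat \<bar>w i\<bar>) (sgn (w i)) (nat \<bar>w i\<bar>)"
      using act_v2[OF w ir ir] by simp
    show ?thesis
    proof (cases "0 < w i")
      case True
      then have "sgn (w i) = 1" by simp
      then have "act r w (v2 1 i 1 i) \<in> DM s" using a P unfolding DM_v2 by auto
      then show ?thesis using True M_decomp[OF assms(2)] by auto
    next
      case False
      then have "sgn (w i) = -1" using sgn_cases_w[OF w ir] by auto
      then have "act r w (v2 1 i 1 i) (nat \<bar>w i\<bar>) = -2" using a by (simp add: v2_apply)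
      then have "act r w (v2 1 i 1 i) \<notin> posroots_G r" using G_ge[of "act r w (v2 1 i 1 i)" r "nat \<bar>w i\<bar>"] by linarith
      then show ?thesis using False M_sub_G by auto
    qed
  qed
  show ?thesis unfolding DM_v2 using key by auto
qed

lemma H_sub: "s < r \<Longrightarrow> posroots_H r s \<subseteq> posroots_G r \<union> DH s"
  using H_decomp[of r s] M_decomp[of s r] M_sub_G[of r s] by auto

lemma H_pos:
  assumes "s < r" "\<beta> \<in> posroots_H r s" shows "\<exists>l. \<beta> l > 0"
proof -
  have "\<beta> \<in> posroots_G r \<or> \<beta> \<in> DH s" using H_sub[OF assms(1)] assms(2) by auto
  then show ?thesis
  proof
    assume "\<beta> \<in> DH s"
    then obtain i where "\<beta> = v2 1 i 0 i" unfolding DH_v2 by auto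
    then have "\<beta> i = 1" by (simp add: v2_apply)
    then show ?thesis by (intro exI[of _ i]) simp
  qed (rule G_pos)
qed

lemma DH_part:
  assumes "w \<in> weyl_M r s" "s < r"
  shows "DH s \<inter> {\<beta>. act r w \<beta> \<in> posroots_H r s} = (\<lambda>i. v2 1 i 0 i) ` {i\<in>{1..s}. 0 < w i}"
proof -
  have w: "w \<in> weyl r" using assms(1) by (rule weylM_weyl)
  have key: "act r w (v2 1 i 0 i) \<in> posroots_H r s \<longleftrightarrow> 0 < w i" if i: "i \<in> {1..s}" for i
  proof -
    have ir: "i \<in> {1..r}" using i assms(2) by auto
    have P: "nat \<bar>w i\<bar> \<in> {1..s}" using weyl_P_in[OF w ir] weylM_block[OF assms(1) ir] i by auto
    have a: "act r w (v2 1 i 0 i) = v2 (sgn (w i)) (nat \<bar>w i\<bar>) 0 (nat \<bar>w i\<bar>)"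
      using act_v2[OF w ir ir] by simp
    show ?thesis
    proof (cases "0 < w i")
      case True
      then have "sgn (w i) = 1" by simp
      then have "act r w (v2 1 i 0 i) \<in> DH s" using a P unfolding DH_v2 by auto
      then show ?thesis using True H_decomp by auto
    next
      case False
      then have "sgn (w i) = -1" using sgn_cases_w[OF w ir] by auto
      then have "\<forall>l. \<not> act r w (v2 1 i 0 i) l > 0" using a by (simp add: v2_apply)
      then have "act r w (v2 1 i 0 i) \<notin> posroots_H r s" using H_pos[OF assms(2)] by blast
      then show ?thesis using False by auto
    qed
  qed
  show ?thesis unfolding DH_v2 using key by auto
qed

lemma actA:
  assumes "w \<in> weyl_M r s" "s \<le> r" "\<beta> \<in> Aset r s"
  shows "act r w \<beta> \<notin> DM s" "act r w \<beta> \<notin> DH s"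
  using Aset_N1[OF assms(3)] N1_act[OF assms(1,2), of \<beta>] DM_N1[of "act r w \<beta>" s] DH_N1[of "act r w \<beta>" s]
  by auto

lemma inj_v2_diag: "inj_on (\<lambda>i. v2 1 i c i) S" if "c \<noteq> -1"
proof (rule inj_onI)
  fix i j assume "v2 1 i c i = v2 1 j c j"
  then have "v2 1 i c i i = v2 1 j c j i" by simp
  then show "i = j" using that by (auto simp: v2_apply split: if_splits)
qed

lemma stepA:
  assumes "w \<in> weyl_M r s" "s < r"
  shows "xQ k (chi (posroots_M r s) r k w) - xQ k (chi (posroots_H r s) r k w)
         = (\<Sum>i\<in>{i\<in>{1..s}. 0 < w i}. if i \<in> {1..k} then 1 else 0)"
proof -
  let ?M = "posroots_M r s" and ?H = "posroots_H r s" and ?A = "Aset r s"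
  let ?S = "{i\<in>{1..s}. 0 < w i}"
  have sr: "s \<le> r" using assms(2) by simp
  have SM: "?M \<inter> {\<beta>. act r w \<beta> \<in> ?M} = (?A \<inter> {\<beta>. act r w \<beta> \<in> ?A}) \<union> (DM s \<inter> {\<beta>. act r w \<beta> \<in> ?M})"
    using M_decomp[OF assms(2)] actA[OF assms(1) sr] by auto
  have SH: "?H \<inter> {\<beta>. act r w \<beta> \<in> ?H} = (?A \<inter> {\<beta>. act r w \<beta> \<in> ?A}) \<union> (DH s \<inter> {\<beta>. act r w \<beta> \<in> ?H})"
    using H_decomp[of r s] actA[OF assms(1) sr] by auto
  have fA: "finite (?A \<inter> {\<beta>. act r w \<beta> \<in> ?A})" using finite_Aset[OF assms(2)] by simp
  have fDM: "finite (DM s \<inter> {\<beta>. act r w \<beta> \<in> ?M})" using finite_DM by simp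
  have fDH: "finite (DH s \<inter> {\<beta>. act r w \<beta> \<in> ?H})" using finite_DH by simp
  have dM: "(?A \<inter> {\<beta>. act r w \<beta> \<in> ?A}) \<inter> (DM s \<inter> {\<beta>. act r w \<beta> \<in> ?M}) = {}"
    using Aset_DM by auto
  have dH: "(?A \<inter> {\<beta>. act r w \<beta> \<in> ?A}) \<inter> (DH s \<inter> {\<beta>. act r w \<beta> \<in> ?H}) = {}"
    using Aset_DH by auto
  have xM: "xQ k (chi ?M r k w) = (\<Sum>\<beta>\<in>?A \<inter> {\<beta>. act r w \<beta> \<in> ?A}. xQ k \<beta>) + (\<Sum>\<beta>\<in>DM s \<inter> {\<beta>. act r w \<beta> \<in> ?M}. xQ k \<beta>)"
    unfolding xQ_chi[OF finite_M] SM by (rule sum.union_disjoint[OF fA fDM dM])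
  have xH: "xQ k (chi ?H r k w) = (\<Sum>\<beta>\<in>?A \<inter> {\<beta>. act r w \<beta> \<in> ?A}. xQ k \<beta>) + (\<Sum>\<beta>\<in>DH s \<inter> {\<beta>. act r w \<beta> \<in> ?H}. xQ k \<beta>)"
    unfolding xQ_chi[OF finite_H[OF assms(2)]] SH by (rule sum.union_disjoint[OF fA fDH dH])
  have pM: "(\<Sum>\<beta>\<in>DM s \<inter> {\<beta>. act r w \<beta> \<in> ?M}. xQ k \<beta>) = (\<Sum>i\<in>?S. if i \<in> {1..k} then 2 else 0)"
    unfolding DM_part[OF assms] by (subst sum.reindex[OF inj_v2_diag]) (auto simp: xQ_v2 intro!: sum.cong)
  have pH: "(\<Sum>\<beta>\<in>DH s \<inter> {\<beta>. act r w \<beta> \<in> ?H}. xQ k \<beta>) = (\<Sum>i\<in>?S. if i \<in> {1..k} then 1 else 0)"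
    unfolding DH_part[OF assms] by (subst sum.reindex[OF inj_v2_diag]) (auto simp: xQ_v2 intro!: sum.cong)
  have "(\<Sum>i\<in>?S. if i \<in> {1..k} then 2 else 0) - (\<Sum>i\<in>?S. if i \<in> {1..k} then 1 else 0)
      = (\<Sum>i\<in>?S. if i \<in> {1..k} then (1::int) else 0)"
    by (simp add: sum_subtractf[symmetric] if_distrib cong: if_cong)
  then show ?thesis unfolding xM xH pM pH by simp
qed

definition fGM :: "nat \<times> nat \<times> int \<Rightarrow> weight" where "fGM = (\<lambda>(i,j,c). v2 1 i c j)"

lemma fGM_inj_aux:
  assumes "v2 1 i c j = v2 1 i' c' j'" "i \<in> {1..s}" "j \<in> {s<..r}" "c \<in> {1,-1}"
     "i' \<in> {1..s}" "j' \<in> {s<..r}" "c' \<in> {1,-1}"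
  shows "i = i' \<and> j = j' \<and> c = c'"
proof -
  have e: "\<And>l. v2 1 i c j l = v2 1 i' c' j' l" using assms(1) by simp
  from e[of i] assms(2-7) have "i = i'" by (auto simp: v2_apply split: if_splits)
  moreover from e[of j] assms(2-7) have "j = j' \<and> c = c'" by (auto simp: v2_apply split: if_splits)
  ultimately show ?thesis by simp
qed

lemma fGM_inj: "inj_on fGM ({1..s} \<times> {s<..r} \<times> {1,-1})"
proof (rule inj_onI)
  fix x y assume a: "x \<in> {1..s} \<times> {s<..r} \<times> {1,-1}" "y \<in> {1..s} \<times> {s<..r} \<times> {1,-1}" "fGM x = fGM y"
  obtain i j c where x: "x = (i,j,c)" by (cases x) auto
  obtain i' j' c' where y: "y = (i',j',c')" by (cases y) auto
  show "x = y" using fGM_inj_aux[of i c j i' c' j' s r] a unfolding x y fGM_def by auto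
qed

lemma GminusM:
  assumes "s < r"
  shows "posroots_G r - posroots_M r s = fGM ` ({1..s} \<times> {s<..r} \<times> {1,-1})"
proof (rule set_eqI, rule iffI)
  fix \<beta> assume b: "\<beta> \<in> posroots_G r - posroots_M r s"
  then have ch: "char_at_tau s \<beta> \<noteq> 1" unfolding posroots_M_def by auto
  obtain i j c where e: "\<beta> = v2 1 i c j" "1 \<le> i" "i \<le> j" "j \<le> r" "c = 1 \<or> (c = -1 \<and> i < j)"
    using b by (auto elim: G_elem)
  have ij: "i < j"
  proof (rule ccontr)
    assume "\<not> i < j" then have "i = j" "c = 1" using e by auto
    then show False using ch e(1) by (auto simp: char_v2_eq split: if_splits)
  qed
  have cabs: "c = 1 \<or> c = -1" using e by auto
  have "i \<le> s \<and> s < j"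
    using ch e(1,2) ij cabs by (auto simp: char_v2_neq split: if_splits)
  then show "\<beta> \<in> fGM ` ({1..s} \<times> {s<..r} \<times> {1,-1})"
    unfolding fGM_def using e cabs by (intro image_eqI[of _ _ "(i,j,c)"]) auto
next
  fix \<beta> assume "\<beta> \<in> fGM ` ({1..s} \<times> {s<..r} \<times> {1,-1})"
  then obtain i j c where e: "\<beta> = v2 1 i c j" "i \<in> {1..s}" "j \<in> {s<..r}" "c = 1 \<or> c = -1"
    unfolding fGM_def by auto
  have "\<beta> \<in> posroots_G r" using e G_mem[of i j r c] by auto
  moreover have "char_at_tau s \<beta> = -1" using e by (auto simp: char_v2_neq)
  ultimately show "\<beta> \<in> posroots_G r - posroots_M r s" unfolding posroots_M_def by auto
qed

lemma stepB:
  assumes "s < r" "k \<le> s"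
  shows "int (flagdim (posroots_G r) k) - int (flagdim (posroots_M r s) k) = 2 * int k * (int r - int s)"
proof -
  let ?G = "posroots_G r" and ?M = "posroots_M r s"
  have split: "?G - levi ?G k = (?M - levi ?M k) \<union> ((?G - ?M) - levi ?G k)"
    using M_sub_G[of r s] unfolding levi_def by auto
  have img: "(?G - ?M) - levi ?G k = fGM ` ({1..k} \<times> {s<..r} \<times> {1,-1})"
  proof -
    have xq: "\<And>i j c. i \<in> {1..s} \<Longrightarrow> j \<in> {s<..r} \<Longrightarrow> xQ k (fGM (i,j,c)) = (if i \<le> k then 1 else 0)"
      using assms unfolding fGM_def by (auto simp: xQ_v2)
    show ?thesis
    proof (rule set_eqI, rule iffI)
      fix \<beta> assume "\<beta> \<in> (?G - ?M) - levi ?G k"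
      then have b: "\<beta> \<in> fGM ` ({1..s} \<times> {s<..r} \<times> {1,-1})" "xQ k \<beta> \<noteq> 0"
        unfolding GminusM[OF assms(1), symmetric] levi_def by auto
      then obtain i j c where e: "\<beta> = fGM (i,j,c)" "i \<in> {1..s}" "j \<in> {s<..r}" "c \<in> {1,-1}" by blast
      then have "i \<le> k" using b(2) xq[of i j c] by (auto split: if_splits)
      then show "\<beta> \<in> fGM ` ({1..k} \<times> {s<..r} \<times> {1,-1})" using e by auto
    next
      fix \<beta> assume "\<beta> \<in> fGM ` ({1..k} \<times> {s<..r} \<times> {1,-1})"
      then obtain i j c where e: "\<beta> = fGM (i,j,c)" "i \<in> {1..k}" "j \<in> {s<..r}" "c \<in> {1,-1}" by blast
      then have i: "i \<in> {1..s}" using assms(2) by auto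
      then have "\<beta> \<in> ?G - ?M" unfolding GminusM[OF assms(1)] using e by auto
      moreover have "xQ k \<beta> \<noteq> 0" using e i xq[of i j c] by auto
      ultimately show "\<beta> \<in> (?G - ?M) - levi ?G k" unfolding levi_def by auto
    qed
  qed
  have fin: "finite (?M - levi ?M k)" "finite ((?G - ?M) - levi ?G k)"
    using finite_M finite_G by auto
  have "card (?G - levi ?G k) = card (?M - levi ?M k) + card ((?G - ?M) - levi ?G k)"
    unfolding split by (rule card_Un_disjoint[OF fin]) auto
  moreover have "card ((?G - ?M) - levi ?G k) = k * (r - s) * 2"
  proof -
    have "inj_on fGM ({1..k} \<times> {s<..r} \<times> {1,-1})"
      by (rule inj_on_subset[OF fGM_inj[of s r]]) (use assms(2) in auto)
    then show ?thesis unfolding img by (simp add: card_image card_cartesian_product)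
  qed
  ultimately show ?thesis unfolding flagdim_def using assms by simp
qed

lemma stepC:
  assumes "w \<in> weyl_M r s" "s < r"
  shows "int (wlength (posroots_G r) r w) - int (wlength (posroots_M r s) r w)
         = 2 * int (card {i\<in>{1..s}. w i < 0}) * (int r - int s)"
proof -
  let ?G = "posroots_G r" and ?M = "posroots_M r s"
  let ?N = "{i\<in>{1..s}. w i < 0}"
  have w: "w \<in> weyl r" using assms(1) by (rule weylM_weyl)
  have sr: "s \<le> r" using assms(2) by simp
  have SG: "{\<beta>\<in>?G. - act r w \<beta> \<in> ?G} = {\<beta>\<in>?M. - act r w \<beta> \<in> ?M} \<union> {\<beta>\<in>?G - ?M. - act r w \<beta> \<in> ?G}"
  proof -
    have "\<beta> \<in> ?M \<Longrightarrow> - act r w \<beta> \<in> ?G \<Longrightarrow> - act r w \<beta> \<in> ?M" for \<beta>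
      using char_act[OF assms(1) sr, of \<beta>] char_uminus[of s "act r w \<beta>"] unfolding posroots_M_def by auto
    then show ?thesis using M_sub_G[of r s] by auto
  qed
  have key: "- act r w (fGM (i,j,c)) \<in> ?G \<longleftrightarrow> w i < 0"
    if t: "i \<in> {1..s}" "j \<in> {s<..r}" "c \<in> {1,-1}" for i j c
  proof -
    have ir: "i \<in> {1..r}" and jr: "j \<in> {1..r}" using t assms(2) by auto
    have Pi: "nat \<bar>w i\<bar> \<in> {1..s}" using weyl_P_in[OF w ir] weylM_block[OF assms(1) ir] t by auto
    have Pj: "nat \<bar>w j\<bar> \<in> {s<..r}" using weyl_P_in[OF w jr] weylM_block[OF assms(1) jr] t by auto
    have a: "- act r w (fGM (i,j,c)) = v2 (- sgn (w i)) (nat \<bar>w i\<bar>) (- (sgn (w j) * c)) (nat \<bar>w j\<bar>)"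
      unfolding fGM_def using act_v2[OF w ir jr] by (simp add: v2_uminus)
    have sj: "- (sgn (w j) * c) = 1 \<or> - (sgn (w j) * c) = -1" using weyl_sgn[OF w jr] t(3) by auto
    have si: "- sgn (w i) = 1 \<or> - sgn (w i) = -1" using weyl_sgn[OF w ir] by auto
    have "- act r w (fGM (i,j,c)) \<in> ?G \<longleftrightarrow> - sgn (w i) = 1"
      unfolding a using Pi Pj by (intro G1 si sj) (auto simp del: nat_le_iff intro: le_less_trans, linarith)
    also have "\<dots> \<longleftrightarrow> w i < 0" using sgn_cases_w[OF w ir] by auto
    finally show ?thesis .
  qed
  have img: "{\<beta>\<in>?G - ?M. - act r w \<beta> \<in> ?G} = fGM ` (?N \<times> {s<..r} \<times> {1,-1})"
  proof (rule set_eqI, rule iffI)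
    fix \<beta> assume b: "\<beta> \<in> {\<beta>\<in>?G - ?M. - act r w \<beta> \<in> ?G}"
    then obtain i j c where e: "\<beta> = fGM (i,j,c)" "i \<in> {1..s}" "j \<in> {s<..r}" "c \<in> {1,-1}"
      unfolding GminusM[OF assms(2)] by blast
    then have "w i < 0" using key[of i j c] b by auto
    then show "\<beta> \<in> fGM ` (?N \<times> {s<..r} \<times> {1,-1})" using e by auto
  next
    fix \<beta> assume "\<beta> \<in> fGM ` (?N \<times> {s<..r} \<times> {1,-1})"
    then obtain i j c where e: "\<beta> = fGM (i,j,c)" "i \<in> {1..s}" "w i < 0" "j \<in> {s<..r}" "c \<in> {1,-1}"
      by blast
    have "\<beta> \<in> ?G - ?M" unfolding GminusM[OF assms(2)] using e by auto
    then show "\<beta> \<in> {\<beta>\<in>?G - ?M. - act r w \<beta> \<in> ?G}" using key[of i j c] e by auto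
  qed
  have fin: "finite {\<beta>\<in>?M. - act r w \<beta> \<in> ?M}" "finite {\<beta>\<in>?G - ?M. - act r w \<beta> \<in> ?G}"
    using finite_M finite_G by auto
  have "card {\<beta>\<in>?G. - act r w \<beta> \<in> ?G} = card {\<beta>\<in>?M. - act r w \<beta> \<in> ?M} + card {\<beta>\<in>?G - ?M. - act r w \<beta> \<in> ?G}"
    unfolding SG by (rule card_Un_disjoint[OF fin]) auto
  moreover have "card {\<beta>\<in>?G - ?M. - act r w \<beta> \<in> ?G} = card ?N * (r - s) * 2"
  proof -
    have "inj_on fGM (?N \<times> {s<..r} \<times> {1,-1})"
      by (rule inj_on_subset[OF fGM_inj[of s r]]) auto
    then show ?thesis unfolding img by (simp add: card_image card_cartesian_product)
  qed
  ultimately show ?thesis unfolding wlength_def using assms(2) by simp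
qed

lemma weyl_id_M: "weyl_id \<in> weyl_M r s"
  unfolding weyl_M_def weyl_def weyl_id_def by (auto simp: bij_betw_def inj_on_def image_iff)

lemma WMQ_pos:
  assumes "w \<in> WMQ r s k" "s < r" "i \<in> {k<..s}"
  shows "0 < w i"
proof -
  have wM: "w \<in> weyl_M r s" using assms(1) unfolding WMQ_def by auto
  have d: "v2 1 i 1 i \<in> DM s" unfolding DM_v2 using assms(3) by auto
  then have "v2 1 i 1 i \<in> levi (posroots_M r s) k"
    unfolding levi_def using M_decomp[OF assms(2)] assms(3) by (auto simp: xQ_v2)
  then have "act r w (v2 1 i 1 i) \<in> posroots_M r s" using assms(1) unfolding WMQ_def by auto
  then have "v2 1 i 1 i \<in> (\<lambda>i. v2 1 i 1 i) ` {i\<in>{1..s}. 0 < w i}"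
    using DM_part[OF wM assms(2)] d by auto
  then obtain i' where "v2 1 i 1 i = v2 1 i' 1 i'" "0 < w i'" by auto
  moreover have "i = i'" using inj_v2_diag[of 1 UNIV] calculation(1) by (auto dest: inj_onD)
  ultimately show ?thesis by simp
qed

lemma count_lemma:
  assumes "w \<in> weyl_M r s" "s \<le> r" "k \<le> s" "\<forall>i\<in>{k<..s}. 0 < w i"
  shows "(\<Sum>i\<in>{i\<in>{1..s}. 0 < w i}. if i \<in> {1..k} then 1 else 0) = int k - int (card {i\<in>{1..s}. w i < 0})"
proof -
  have w: "w \<in> weyl r" using assms(1) by (rule weylM_weyl)
  have "(\<Sum>i\<in>{i\<in>{1..s}. 0 < w i}. if i \<in> {1..k} then 1 else 0) = (\<Sum>i\<in>{i\<in>{1..s}. 0 < w i} \<inter> {1..k}. (1::int))"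
    by (rule sum.inter_restrict[symmetric]) simp
  also have "{i\<in>{1..s}. 0 < w i} \<inter> {1..k} = {i\<in>{1..k}. 0 < w i}" using assms(3) by auto
  finally have e1: "(\<Sum>i\<in>{i\<in>{1..s}. 0 < w i}. if i \<in> {1..k} then 1 else 0) = int (card {i\<in>{1..k}. 0 < w i})" by simp
  have le: "i \<le> k" if "i \<in> {1..s}" "w i < 0" for i
  proof (rule ccontr)
    assume "\<not> i \<le> k"
    then have "i \<in> {k<..s}" using that(1) by simp
    then have "0 < w i" using assms(4) by blast
    then show False using that(2) by simp
  qed
  have e2: "{i\<in>{1..s}. w i < 0} = {i\<in>{1..k}. w i < 0}"
  proof (rule set_eqI)
    fix i show "i \<in> {i\<in>{1..s}. w i < 0} \<longleftrightarrow> i \<in> {i\<in>{1..k}. w i < 0}"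
      using le[of i] assms(3) by auto
  qed
  have un: "{1..k} = {i\<in>{1..k}. 0 < w i} \<union> {i\<in>{1..k}. w i < 0}"
  proof (rule set_eqI)
    fix i show "i \<in> {1..k} \<longleftrightarrow> i \<in> {i\<in>{1..k}. 0 < w i} \<union> {i\<in>{1..k}. w i < 0}"
    proof
      assume i: "i \<in> {1..k}"
      then have "i \<in> {1..r}" using assms(2,3) by simp
      then have "w i \<noteq> 0" by (rule weyl_nz[OF w])
      then show "i \<in> {i\<in>{1..k}. 0 < w i} \<union> {i\<in>{1..k}. w i < 0}" using i by auto
    qed auto
  qed
  have "card {1..k} = card {i\<in>{1..k}. 0 < w i} + card {i\<in>{1..k}. w i < 0}"
    by (subst un, rule card_Un_disjoint) auto
  then show ?thesis unfolding e1 e2 by simp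
qed

lemma diff_chi:
  assumes "w \<in> weyl_M r s" "s < r" "k \<le> s" "\<forall>i\<in>{k<..s}. 0 < w i"
  shows "xQ k (chi (posroots_M r s) r k w) - xQ k (chi (posroots_H r s) r k w) = int k - int (card {i\<in>{1..s}. w i < 0})"
  unfolding stepA[OF assms(1,2)] using count_lemma[OF assms(1) _ assms(3,4)] assms(2) by simp

lemma theta_eq: "theta R r k ws = xQ k (chi R r k weyl_id) - sum_list (map (\<lambda>w. xQ k (chi R r k w)) ws)"
  unfolding theta_def xQ_diff xQ_sum_list by simp

lemma expdim_eq: "expdim R r k ws = int (flagdim R k) - sum_list (map (\<lambda>w. int (flagdim R k) - int (wlength R r w)) ws)"
  unfolding expdim_def schubert_codim_def by (simp add: comp_def)

theorem mainTheorem10: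
  fixes r s k :: nat and ws :: "(nat \<Rightarrow> int) list"
  assumes "1 \<le> k" and "k \<le> s" and "s < r"
    and "\<forall>w \<in> set ws. w \<in> WMQ r s k"
  shows "real_of_int (theta (posroots_M r s) r k ws) - real_of_int (theta (posroots_H r s) r k ws)
         = real_of_int (expdim (posroots_G r) r k ws - expdim (posroots_M r s) r k ws)
           / (2 * (real r - real s))"
proof -
  let ?M = "posroots_M r s" and ?H = "posroots_H r s" and ?G = "posroots_G r"
  define c where "c w = int (card {i\<in>{1..s}. w i < (0::int)})" for w :: "nat \<Rightarrow> int"
  define D where "D = int r - int s"
  have wsM: "\<And>w. w \<in> set ws \<Longrightarrow> w \<in> weyl_M r s" using assms(4) unfolding WMQ_def by auto
  have wspos: "\<And>w. w \<in> set ws \<Longrightarrow> \<forall>i\<in>{k<..s}. 0 < w i" using assms(4) WMQ_pos assms(3) by blast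
  have c_id: "c weyl_id = 0" unfolding c_def weyl_id_def by auto
  have id_pos: "\<forall>i\<in>{k<..s}. 0 < weyl_id i" unfolding weyl_id_def by auto
  have T: "theta ?M r k ws - theta ?H r k ws = int k - sum_list (map (\<lambda>w. int k - c w) ws)"
  proof -
    have "theta ?M r k ws - theta ?H r k ws =
       (xQ k (chi ?M r k weyl_id) - xQ k (chi ?H r k weyl_id))
       - sum_list (map (\<lambda>w. xQ k (chi ?M r k w) - xQ k (chi ?H r k w)) ws)"
      unfolding theta_eq sum_list_subtractf by simp
    also have "map (\<lambda>w. xQ k (chi ?M r k w) - xQ k (chi ?H r k w)) ws = map (\<lambda>w. int k - c w) ws"
      using diff_chi[OF wsM assms(3,2) wspos] unfolding c_def by simp
    also have "xQ k (chi ?M r k weyl_id) - xQ k (chi ?H r k weyl_id) = int k"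
      using diff_chi[OF weyl_id_M assms(3,2) id_pos] c_id unfolding c_def by simp
    finally show ?thesis .
  qed
  have E: "expdim ?G r k ws - expdim ?M r k ws = 2 * D * (int k - sum_list (map (\<lambda>w. int k - c w) ws))"
  proof -
    have "expdim ?G r k ws - expdim ?M r k ws =
       (int (flagdim ?G k) - int (flagdim ?M k))
       - sum_list (map (\<lambda>w. (int (flagdim ?G k) - int (flagdim ?M k)) - (int (wlength ?G r w) - int (wlength ?M r w))) ws)"
    proof -
      have "sum_list (map (\<lambda>w. int (flagdim ?G k) - int (wlength ?G r w)) ws) - sum_list (map (\<lambda>w. int (flagdim ?M k) - int (wlength ?M r w)) ws)
          = sum_list (map (\<lambda>w. (int (flagdim ?G k) - int (wlength ?G r w)) - (int (flagdim ?M k) - int (wlength ?M r w))) ws)"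
        by (simp add: sum_list_subtractf)
      also have "\<dots> = sum_list (map (\<lambda>w. (int (flagdim ?G k) - int (flagdim ?M k)) - (int (wlength ?G r w) - int (wlength ?M r w))) ws)"
        by (simp add: algebra_simps)
      finally show ?thesis unfolding expdim_eq by simp
    qed
    also have "map (\<lambda>w. (int (flagdim ?G k) - int (flagdim ?M k)) - (int (wlength ?G r w) - int (wlength ?M r w))) ws
        = map (\<lambda>w. 2 * D * (int k - c w)) ws"
    proof (rule map_cong[OF refl])
      fix w assume "w \<in> set ws"
      show "(int (flagdim ?G k) - int (flagdim ?M k)) - (int (wlength ?G r w) - int (wlength ?M r w)) = 2 * D * (int k - c w)"
        unfolding stepB[OF assms(3,2)] stepC[OF wsM[OF \<open>w \<in> set ws\<close>] assms(3)] c_def D_def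
        by (simp add: algebra_simps)
    qed
    also have "sum_list (map (\<lambda>w. 2 * D * (int k - c w)) ws) = 2 * D * sum_list (map (\<lambda>w. int k - c w) ws)"
      by (simp add: sum_list_const_mult)
    finally show ?thesis unfolding stepB[OF assms(3,2)] D_def by (simp add: algebra_simps)
  qed
  have Dpos: "real r - real s > 0" using assms(3) by simp
  have "real_of_int (expdim ?G r k ws - expdim ?M r k ws) = 2 * (real r - real s) * real_of_int (theta ?M r k ws - theta ?H r k ws)"
    unfolding E T D_def by simp
  then show ?thesis using Dpos by (simp add: field_simps)
qed

end
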